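(* Let $\Theta\subseteq\mathbb{R}^p$ be open and $\rho_\theta=\sum_{k=1}^dp_k(\theta)|w_k(\theta)\rangle\langle w_k(\theta)|$ a family of density matrices on $\mathbb{C}^d$, with $p_k\ge0$ differentiable and $\{|w_k(\theta)\rangle\}$ an orthonormal basis of $\mathbb{C}^d$ depending differentiably on $\theta$. Then, for every $\theta\in\Theta$, $H_\theta\le C_L(\theta)\le C_\Upsilon(\theta)$ in positive semidefinite order. Equality $H_\theta=C_L(\theta)$ holds if and only if $\langle\frac{\partial w_j}{\partial\theta^m}|w_k\rangle=0$ for all $m$ and all $j\neq k$ with $p_j,p_k>0$. Equality $C_L(\theta)=C_\Upsilon(\theta)$ holds if and only if $\langle\frac{\partial w_i}{\partial\theta^m}|w_i\rangle=0$ for all $m$ and all $i$ with $p_i>0$.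
   Context: Write $|w_i^{(m)}\rangle=\partial|w_i\rangle/\partial\theta^m$. $H_\theta$ is the SLD quantum information matrix with entries $(H_\theta)_{kl}=\mathrm{Re}\,\mathrm{tr}\{\lambda^k\rho_\theta\lambda^l\}$, where $\lambda^k$ is a Hermitian solution of $\frac{\partial\rho_\theta}{\partial\theta^k}=\frac12(\rho_\theta\lambda^k+\lambda^k\rho_\theta)$. The $C_L$ quantum information is the $p\times p$ matrix $(C_L)_{kl}=\sum_{i:p_i>0}\frac{1}{p_i}\frac{\partial p_i}{\partial\theta^k}\frac{\partial p_i}{\partial\theta^l}+4\,\mathrm{Re}\sum_{i<j}(p_i+p_j)\langle w_i^{(k)}|w_j\rangle\langle w_j|w_i^{(l)}\rangle$. The Sarovar–Milburn quantum information of the family (relative to the chosen eigenvectors) is $(C_\Upsilon)_{kl}=(C_L)_{kl}+4\sum_{i:p_i>0}p_i\langle w_i^{(k)}|w_i\rangle\langle w_i|w_i^{(l)}\rangle$. *)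

theory Defs
  imports "HOL-Analysis.Analysis"
begin

definition braket :: "complex^'d \<Rightarrow> complex^'d \<Rightarrow> complex" where
  "braket a b = (\<Sum>i\<in>UNIV. cnj (a$i) * b$i)"

definition outer :: "complex^'d \<Rightarrow> complex^'d \<Rightarrow> complex^'d^'d" where
  "outer a b = (\<chi> i j. a$i * cnj (b$j))"

definition adj :: "complex^'d^'d \<Rightarrow> complex^'d^'d" where
  "adj A = (\<chi> i j. cnj (A$j$i))"

definition hermitian :: "complex^'d^'d \<Rightarrow> bool" where
  "hermitian A \<longleftrightarrow> adj A = A"

definition mtrace :: "complex^'d^'d \<Rightarrow> complex" where
  "mtrace A = (\<Sum>i\<in>UNIV. A$i$i)"

definition pd :: "(real^'p \<Rightarrow> 'b::real_normed_vector) \<Rightarrow> real^'p \<Rightarrow> 'p \<Rightarrow> 'b" where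
  "pd f \<theta> m = frechet_derivative f (at \<theta>) (axis m 1)"

definition rho :: "('d \<Rightarrow> real^'p \<Rightarrow> real) \<Rightarrow> ('d \<Rightarrow> real^'p \<Rightarrow> complex^'d) \<Rightarrow> real^'p \<Rightarrow> complex^'d^'d" where
  "rho p w \<theta> = (\<Sum>k\<in>UNIV. p k \<theta> *\<^sub>R outer (w k \<theta>) (w k \<theta>))"

definition SLD :: "('d \<Rightarrow> real^'p \<Rightarrow> real) \<Rightarrow> ('d \<Rightarrow> real^'p \<Rightarrow> complex^'d) \<Rightarrow> real^'p \<Rightarrow> 'p \<Rightarrow> complex^'d^'d" where
  "SLD p w \<theta> m = (SOME L. hermitian L \<and>
      pd (rho p w) \<theta> m = (1/2::real) *\<^sub>R (rho p w \<theta> ** L + L ** rho p w \<theta>))"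

definition H_info :: "('d \<Rightarrow> real^'p \<Rightarrow> real) \<Rightarrow> ('d \<Rightarrow> real^'p \<Rightarrow> complex^'d) \<Rightarrow> real^'p \<Rightarrow> real^'p^'p" where
  "H_info p w \<theta> = (\<chi> k l. Re (mtrace (SLD p w \<theta> k ** rho p w \<theta> ** SLD p w \<theta> l)))"

definition CL_info :: "('d::{finite,linorder} \<Rightarrow> real^'p \<Rightarrow> real) \<Rightarrow> ('d::{finite,linorder} \<Rightarrow> real^'p \<Rightarrow> complex^'d::{finite,linorder}) \<Rightarrow> real^'p \<Rightarrow> real^'p^'p" where
  "CL_info p w \<theta> = (\<chi> k l.
     (\<Sum>i\<in>{i. p i \<theta> > 0}. (1 / p i \<theta>) * pd (p i) \<theta> k * pd (p i) \<theta> l)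
     + 4 * Re (\<Sum>(i,j)\<in>{(i,j). i < j}. of_real (p i \<theta> + p j \<theta>) *
          braket (pd (w i) \<theta> k) (w j \<theta>) * braket (w j \<theta>) (pd (w i) \<theta> l)))"

text \<open>The extra term of the Sarovar-Milburn information is real; we take its real part.\<close>
definition CU_info :: "('d::{finite,linorder} \<Rightarrow> real^'p \<Rightarrow> real) \<Rightarrow> ('d::{finite,linorder} \<Rightarrow> real^'p \<Rightarrow> complex^'d::{finite,linorder}) \<Rightarrow> real^'p \<Rightarrow> real^'p^'p" where
  "CU_info p w \<theta> = (\<chi> k l. CL_info p w \<theta> $ k $ l
     + 4 * Re (\<Sum>i\<in>{i. p i \<theta> > 0}. of_real (p i \<theta>) *
          braket (pd (w i) \<theta> k) (w i \<theta>) * braket (w i \<theta>) (pd (w i) \<theta> l)))"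

definition psd_le :: "real^'p^'p \<Rightarrow> real^'p^'p \<Rightarrow> bool" where
  "psd_le A B \<longleftrightarrow> (\<forall>x. x \<bullet> ((B - A) *v x) \<ge> 0)"

end

theory Submission
  imports Defs
begin


lemma braket_bilinear: "bilinear (braket :: complex^'d \<Rightarrow> complex^'d \<Rightarrow> complex)"
  unfolding bilinear_def
  by (auto intro!: linearI simp: braket_def sum.distrib sum_distrib_left algebra_simps; simp add: scaleR_conv_of_real sum_distrib_left algebra_simps)

lemma outer_bilinear: "bilinear (outer :: complex^'d \<Rightarrow> complex^'d \<Rightarrow> complex^'d^'d)"
  unfolding bilinear_def
  by (auto intro!: linearI simp: outer_def vec_eq_iff algebra_simps; simp add: scaleR_conv_of_real sum_distrib_left algebra_simps)

lemma bb_braket: "bounded_bilinear (braket :: complex^'d \<Rightarrow> complex^'d \<Rightarrow> complex)"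
  using braket_bilinear bilinear_conv_bounded_bilinear by blast
lemma bb_outer: "bounded_bilinear (outer :: complex^'d \<Rightarrow> complex^'d \<Rightarrow> complex^'d^'d)"
  using outer_bilinear bilinear_conv_bounded_bilinear by blast

lemma braket_cnj: "braket b a = cnj (braket a b)"
  by (simp add: braket_def mult.commute)

lemma ortho_deriv:
  fixes w :: "'d \<Rightarrow> real^'p \<Rightarrow> complex^'d"
  assumes "open T" "t \<in> T" "\<forall>t\<in>T. \<forall>i j. braket (w i t) (w j t) = (if i = j then 1 else 0)"
    "w i differentiable (at t)" "w j differentiable (at t)"
  shows "braket (pd (w i) t m) (w j t) + braket (w i t) (pd (w j) t m) = 0"
proof -
  have di: "(w i has_derivative frechet_derivative (w i) (at t)) (at t)"
    using assms(4) frechet_derivative_works by blast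
  have dj: "(w j has_derivative frechet_derivative (w j) (at t)) (at t)"
    using assms(5) frechet_derivative_works by blast
  have g: "((\<lambda>x. braket (w i x) (w j x)) has_derivative
     (\<lambda>h. braket (w i t) (frechet_derivative (w j) (at t) h) + braket (frechet_derivative (w i) (at t) h) (w j t))) (at t)"
    by (rule bounded_bilinear.FDERIV[OF bb_braket di dj])
  have c: "((\<lambda>x. (if i = j then 1 else 0)::complex) has_derivative (\<lambda>h. 0)) (at t)"
    by simp
  have g0: "((\<lambda>x. braket (w i x) (w j x)) has_derivative (\<lambda>h. 0)) (at t)"
    by (rule has_derivative_transform_within_open[OF c assms(1,2)]) (use assms(3) in auto)
  have "(\<lambda>h. braket (w i t) (frechet_derivative (w j) (at t) h) + braket (frechet_derivative (w i) (at t) h) (w j t)) = (\<lambda>h. 0)"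
    using has_derivative_unique[OF g g0] .
  from fun_cong[OF this, of "axis m 1"] show ?thesis
    unfolding pd_def by (simp add: add.commute)
qed

lemma pd_zero_min:
  fixes f :: "real^'p \<Rightarrow> real"
  assumes "open T" "t \<in> T" "\<forall>t\<in>T. f t \<ge> 0" "f t = 0" "f differentiable (at t)"
  shows "pd f t m = 0"
proof -
  have d: "(f has_derivative frechet_derivative f (at t)) (at t)"
    using assms(5) frechet_derivative_works by blast
  have "eventually (\<lambda>y. y \<in> T) (at t)"
    using assms(1,2) eventually_at_topological by blast
  then have "eventually (\<lambda>y. f t \<le> f y) (at t)"
    by (rule eventually_mono) (use assms(3,4) in auto)
  from has_derivative_local_min[OF d this] show ?thesis
    unfolding pd_def by simp
qed

lemma rho_deriv:
  fixes w :: "'d::finite \<Rightarrow> real^'p \<Rightarrow> complex^'d" and p :: "'d \<Rightarrow> real^'p \<Rightarrow> real"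
  assumes "\<forall>k. p k differentiable (at t)" "\<forall>k. w k differentiable (at t)"
  shows "pd (rho p w) t m = (\<Sum>k\<in>UNIV. pd (p k) t m *\<^sub>R outer (w k t) (w k t)
      + p k t *\<^sub>R (outer (w k t) (pd (w k) t m) + outer (pd (w k) t m) (w k t)))"
proof -
  have dp: "\<And>k. (p k has_derivative frechet_derivative (p k) (at t)) (at t)"
    using assms(1) frechet_derivative_works by blast
  have dw: "\<And>k. (w k has_derivative frechet_derivative (w k) (at t)) (at t)"
    using assms(2) frechet_derivative_works by blast
  have o: "\<And>k. ((\<lambda>x. outer (w k x) (w k x)) has_derivative
     (\<lambda>h. outer (w k t) (frechet_derivative (w k) (at t) h) + outer (frechet_derivative (w k) (at t) h) (w k t))) (at t)"
    by (rule bounded_bilinear.FDERIV[OF bb_outer dw dw])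
  have "(rho p w has_derivative (\<lambda>h. \<Sum>k\<in>UNIV. frechet_derivative (p k) (at t) h *\<^sub>R outer (w k t) (w k t)
      + p k t *\<^sub>R (outer (w k t) (frechet_derivative (w k) (at t) h) + outer (frechet_derivative (w k) (at t) h) (w k t)))) (at t)"
    unfolding rho_def[abs_def]
    apply (rule has_derivative_sum)
    using has_derivative_scaleR[OF dp o] by (simp add: add.commute)
  note e = frechet_derivative_at[OF this, symmetric]
  show ?thesis
    unfolding pd_def e by simp
qed

definition Umat :: "('d \<Rightarrow> complex^'d) \<Rightarrow> complex^'d^'d" where
  "Umat v = (\<chi> a k. v k $ a)"

lemma adj_adj[simp]: "adj (adj A) = A"
  by (simp add: adj_def vec_eq_iff)

lemma adj_mult: "adj (A ** B) = adj B ** adj A"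
  by (simp add: adj_def vec_eq_iff matrix_matrix_mult_def mult.commute)

lemma U_left:
  fixes v :: "'d::finite \<Rightarrow> complex^'d"
  assumes "\<forall>i j. braket (v i) (v j) = (if i = j then 1 else 0)"
  shows "adj (Umat v) ** Umat v = mat 1"
  using assms by (simp add: adj_def Umat_def vec_eq_iff matrix_matrix_mult_def mat_def braket_def)

lemma U_right:
  fixes v :: "'d::finite \<Rightarrow> complex^'d"
  assumes "\<forall>i j. braket (v i) (v j) = (if i = j then 1 else 0)"
  shows "Umat v ** adj (Umat v) = mat 1"
  using U_left[OF assms] matrix_left_right_inverse by blast

lemma tf_entry:
  fixes v :: "'d::finite \<Rightarrow> complex^'d"
  shows "(adj (Umat v) ** A ** Umat v) $ i $ j = braket (v i) (A *v v j)"
  by (simp add: adj_def Umat_def matrix_matrix_mult_def matrix_vector_mult_def braket_def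
      sum_distrib_left sum_distrib_right mult.assoc)
     (rule sum.swap)

lemma tf_mult:
  fixes v :: "'d::finite \<Rightarrow> complex^'d"
  assumes "\<forall>i j. braket (v i) (v j) = (if i = j then 1 else 0)"
  shows "adj (Umat v) ** (A ** B) ** Umat v = (adj (Umat v) ** A ** Umat v) ** (adj (Umat v) ** B ** Umat v)"
proof -
  have "(adj (Umat v) ** A ** Umat v) ** (adj (Umat v) ** B ** Umat v)
      = adj (Umat v) ** A ** (Umat v ** adj (Umat v)) ** B ** Umat v"
    by (simp add: matrix_mul_assoc)
  also have "\<dots> = adj (Umat v) ** (A ** B) ** Umat v"
    using U_right[OF assms] by (simp add: matrix_mul_assoc)
  finally show ?thesis by simp
qed

lemma tf_inj:
  fixes v :: "'d::finite \<Rightarrow> complex^'d"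
  assumes "\<forall>i j. braket (v i) (v j) = (if i = j then 1 else 0)"
    and "adj (Umat v) ** A ** Umat v = adj (Umat v) ** B ** Umat v"
  shows "A = B"
proof -
  have e: "Umat v ** (adj (Umat v) ** X ** Umat v) ** adj (Umat v) = X" for X
  proof -
    have "Umat v ** (adj (Umat v) ** X ** Umat v) ** adj (Umat v) = (Umat v ** adj (Umat v)) ** X ** (Umat v ** adj (Umat v))"
      by (simp only: matrix_mul_assoc)
    then show ?thesis using U_right[OF assms(1)] by simp
  qed
  have "Umat v ** (adj (Umat v) ** A ** Umat v) ** adj (Umat v) = A" by (rule e)
  moreover have "Umat v ** (adj (Umat v) ** B ** Umat v) ** adj (Umat v) = B" by (rule e)
  ultimately show ?thesis using assms(2) by metis
qed

lemma tf_back: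
  fixes v :: "'d::finite \<Rightarrow> complex^'d"
  assumes "\<forall>i j. braket (v i) (v j) = (if i = j then 1 else 0)"
  shows "adj (Umat v) ** (Umat v ** X ** adj (Umat v)) ** Umat v = X"
proof -
  have "adj (Umat v) ** (Umat v ** X ** adj (Umat v)) ** Umat v = (adj (Umat v) ** Umat v) ** X ** (adj (Umat v) ** Umat v)"
    by (simp only: matrix_mul_assoc)
  then show ?thesis using U_left[OF assms] by simp
qed

lemma mtrace_tf:
  fixes v :: "'d::finite \<Rightarrow> complex^'d"
  assumes "\<forall>i j. braket (v i) (v j) = (if i = j then 1 else 0)"
  shows "mtrace (adj (Umat v) ** A ** Umat v) = mtrace A"
proof -
  have t: "mtrace X = trace X" for X :: "complex^'d^'d" by (simp add: mtrace_def trace_def)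
  have "trace (adj (Umat v) ** A ** Umat v) = trace (Umat v ** (adj (Umat v) ** A))"
    using trace_mul_sym by blast
  also have "\<dots> = trace A" using U_right[OF assms] by (simp add: matrix_mul_assoc)
  finally show ?thesis by (simp add: t)
qed

lemma ent_linear: "linear (\<lambda>A::complex^'d::finite^'d. braket x (A *v y))"
  by (auto intro!: linearI simp: braket_def matrix_vector_mult_def sum.distrib sum_distrib_left algebra_simps;
      simp add: scaleR_conv_of_real sum_distrib_left algebra_simps)

lemma ent_outer: "braket x (outer a b *v y) = braket x a * braket b y"
  by (simp add: braket_def outer_def matrix_vector_mult_def sum_distrib_left sum_distrib_right algebra_simps)
     (rule sum.swap)

lemma gram_form:
  fixes c :: "'t \<Rightarrow> real" and g :: "'p::finite \<Rightarrow> 't \<Rightarrow> complex" and x :: "real^'p"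
  shows "x \<bullet> ((\<chi> k l. \<Sum>t\<in>T. c t * Re (g k t * cnj (g l t))) *v x)
     = (\<Sum>t\<in>T. c t * (cmod (\<Sum>k\<in>UNIV. of_real (x$k) * g k t))\<^sup>2)"
proof -
  have "x \<bullet> ((\<chi> k l. \<Sum>t\<in>T. c t * Re (g k t * cnj (g l t))) *v x)
     = (\<Sum>k\<in>UNIV. \<Sum>l\<in>UNIV. \<Sum>t\<in>T. c t * (x$k * x$l * Re (g k t * cnj (g l t))))"
    by (simp add: inner_vec_def matrix_vector_mult_def sum_distrib_left sum_distrib_right) (simp add: mult_ac)
  also have "\<dots> = (\<Sum>t\<in>T. \<Sum>k\<in>UNIV. \<Sum>l\<in>UNIV. c t * (x$k * x$l * Re (g k t * cnj (g l t))))"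
    by (subst sum.swap, subst (2) sum.swap) simp
  also have "\<dots> = (\<Sum>t\<in>T. c t * (cmod (\<Sum>k\<in>UNIV. of_real (x$k) * g k t))\<^sup>2)"
  proof (rule sum.cong[OF refl])
    fix t
    have "(cmod (\<Sum>k\<in>UNIV. of_real (x$k) * g k t))\<^sup>2 = Re ((\<Sum>k\<in>UNIV. of_real (x$k) * g k t) * cnj (\<Sum>k\<in>UNIV. of_real (x$k) * g k t))"
      by (simp add: cmod_def power2_eq_square sum_negf)
    also have "\<dots> = (\<Sum>k\<in>UNIV. \<Sum>l\<in>UNIV. x$k * x$l * Re (g k t * cnj (g l t)))"
      by (simp add: sum_distrib_left sum_distrib_right) (simp add: algebra_simps)
    finally show "(\<Sum>k\<in>UNIV. \<Sum>l\<in>UNIV. c t * (x$k * x$l * Re (g k t * cnj (g l t)))) = c t * (cmod (\<Sum>k\<in>UNIV. of_real (x$k) * g k t))\<^sup>2"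
      by (simp add: sum_distrib_left)
  qed
  finally show ?thesis .
qed

lemma gram_psd:
  fixes c :: "'t \<Rightarrow> real" and g :: "'p::finite \<Rightarrow> 't \<Rightarrow> complex" and x :: "real^'p"
  assumes "\<forall>t\<in>T. c t \<ge> 0"
  shows "x \<bullet> ((\<chi> k l. \<Sum>t\<in>T. c t * Re (g k t * cnj (g l t))) *v x) \<ge> 0"
  unfolding gram_form using assms by (auto intro!: sum_nonneg)

lemma gram_zero:
  fixes c :: "'t \<Rightarrow> real" and g :: "'p::finite \<Rightarrow> 't \<Rightarrow> complex"
  assumes "finite T" "\<forall>t\<in>T. c t \<ge> 0"
  shows "((\<chi> k l. \<Sum>t\<in>T. c t * Re (g k t * cnj (g l t))) = (0::real^'p^'p))
     \<longleftrightarrow> (\<forall>m. \<forall>t\<in>T. c t > 0 \<longrightarrow> g m t = 0)"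
proof
  assume z: "(\<chi> k l. \<Sum>t\<in>T. c t * Re (g k t * cnj (g l t))) = (0::real^'p^'p)"
  show "\<forall>m. \<forall>t\<in>T. c t > 0 \<longrightarrow> g m t = 0"
  proof (intro allI ballI impI)
    fix m t assume t: "t \<in> T" "c t > 0"
    have re: "Re (z * cnj z) = (cmod z)\<^sup>2" for z :: complex
      by (simp add: cmod_def power2_eq_square)
    have "(\<chi> k l. \<Sum>t\<in>T. c t * Re (g k t * cnj (g l t))) $ m $ m = 0"
      using z by simp
    then have s: "(\<Sum>t\<in>T. c t * (cmod (g m t))\<^sup>2) = 0"
      by (simp only: vec_lambda_beta re)
    have nn: "\<And>x. x \<in> T \<Longrightarrow> 0 \<le> c x * (cmod (g m x))\<^sup>2"
      using assms(2) by simp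
    have "\<forall>x\<in>T. c x * (cmod (g m x))\<^sup>2 = 0"
      using sum_nonneg_eq_0_iff[OF assms(1), of "\<lambda>x. c x * (cmod (g m x))\<^sup>2"] nn s by simp
    then have "c t * (cmod (g m t))\<^sup>2 = 0" using t(1) by blast
    then show "g m t = 0" using t(2) by simp
  qed
next
  assume h: "\<forall>m. \<forall>t\<in>T. c t > 0 \<longrightarrow> g m t = 0"
  have "c t * Re (g k t * cnj (g l t)) = 0" if "t \<in> T" for k l t
  proof (cases "c t > 0")
    case True then show ?thesis using h that by simp
  next
    case False then have "c t = 0" using assms(2) that by force
    then show ?thesis by simp
  qed
  then have "\<And>k l. (\<Sum>t\<in>T. c t * Re (g k t * cnj (g l t))) = 0"
    by (intro sum.neutral) blast
  then show "(\<chi> k l. \<Sum>t\<in>T. c t * Re (g k t * cnj (g l t))) = (0::real^'p^'p)"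
    unfolding vec_eq_iff by simp
qed


lemma sum_delta_r:
  fixes f g :: "'a::finite \<Rightarrow> 'b::semiring_0"
  shows "(\<Sum>k\<in>UNIV. f k * (if k = j then g k else 0)) = f j * g j"
proof -
  have "(\<Sum>k\<in>UNIV. f k * (if k = j then g k else 0)) = (\<Sum>k\<in>UNIV. if k = j then f k * g k else 0)"
    by (rule sum.cong) auto
  then show ?thesis by simp
qed

lemma sum_delta_l:
  fixes f g :: "'a::finite \<Rightarrow> 'b::semiring_0"
  shows "(\<Sum>k\<in>UNIV. (if j = k then g k else 0) * f k) = g j * f j"
proof -
  have "(\<Sum>k\<in>UNIV. (if j = k then g k else 0) * f k) = (\<Sum>k\<in>UNIV. if j = k then g k * f k else 0)"
    by (rule sum.cong) auto
  then show ?thesis by simp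
qed

lemma sum_pairs:
  fixes f :: "'a::finite \<Rightarrow> 'a \<Rightarrow> 'b::comm_monoid_add"
  shows "(\<Sum>(i,j)\<in>{(i,j). R i j}. f i j) = (\<Sum>i\<in>UNIV. \<Sum>j\<in>UNIV. if R i j then f i j else 0)"
proof -
  have e: "{(i,j). R i j} = {x \<in> UNIV. case x of (i,j) \<Rightarrow> R i j}" by auto
  have "(\<Sum>(i,j)\<in>{(i,j). R i j}. f i j) = (\<Sum>x\<in>UNIV. if (case x of (i,j) \<Rightarrow> R i j) then (case x of (i,j) \<Rightarrow> f i j) else 0)"
    unfolding e by (subst sum.inter_filter) auto
  also have "\<dots> = (\<Sum>x\<in>UNIV \<times> UNIV. case x of (i,j) \<Rightarrow> if R i j then f i j else 0)"
    by (rule sum.cong) auto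
  also have "\<dots> = (\<Sum>i\<in>UNIV. \<Sum>j\<in>UNIV. if R i j then f i j else 0)"
    by (rule sum.cartesian_product[symmetric])
  finally show ?thesis .
qed

lemma sum_UNIV_pairs:
  fixes f :: "'a::finite \<times> 'a \<Rightarrow> 'b::comm_monoid_add"
  shows "(\<Sum>t\<in>UNIV. f t) = (\<Sum>i\<in>UNIV. \<Sum>j\<in>UNIV. f (i,j))"
  by (metis (no_types) UNIV_Times_UNIV sum.cartesian_product case_prod_eta)

lemma sum_set_if:
  fixes f :: "'a::finite \<Rightarrow> 'b::comm_monoid_add"
  shows "(\<Sum>i\<in>{i. R i}. f i) = (\<Sum>i\<in>UNIV. if R i then f i else 0)"
proof -
  have "sum f {i \<in> UNIV. R i} = (\<Sum>i\<in>UNIV. if R i then f i else 0)"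
    by (rule sum.inter_filter) simp
  then show ?thesis by simp
qed

lemma sym_split:
  fixes P :: "'a::{finite,linorder} \<Rightarrow> real" and G :: "'a \<Rightarrow> 'a \<Rightarrow> real"
  assumes "\<And>i j. G j i = G i j"
  shows "(\<Sum>i\<in>UNIV. \<Sum>j\<in>UNIV. if i < j then (P i + P j) * G i j else 0)
       = (\<Sum>i\<in>UNIV. \<Sum>j\<in>UNIV. if i \<noteq> j then P j * G i j else 0)"
proof -
  have a: "(\<Sum>i\<in>UNIV. \<Sum>j\<in>UNIV. if i \<noteq> j then P j * G i j else 0)
     = (\<Sum>i\<in>UNIV. \<Sum>j\<in>UNIV. if i < j then P j * G i j else 0)
     + (\<Sum>i\<in>UNIV. \<Sum>j\<in>UNIV. if j < i then P j * G i j else 0)"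
    unfolding sum.distrib[symmetric]
    by (intro sum.cong refl) (auto simp: linorder_neq_iff)
  have b: "(\<Sum>i\<in>UNIV. \<Sum>j\<in>UNIV. if j < i then P j * G i j else 0)
     = (\<Sum>i\<in>UNIV. \<Sum>j\<in>UNIV. if i < j then P i * G i j else 0)"
    apply (subst sum.swap)
    apply (intro sum.cong refl)
    using assms by metis
  show ?thesis
    unfolding a b sum.distrib[symmetric]
    by (intro sum.cong refl) (auto simp: algebra_simps)
qed

lemma coef_closed:
  fixes a b :: real
  assumes "a \<ge> 0" "b \<ge> 0"
  shows "4*b - 4*b*(b - a)^2/(a + b)^2 = 16*a*b^2/(a+b)^2"
proof (cases "a + b = 0")
  case True then have "a = 0" "b = 0" using assms by auto
  then show ?thesis by simp
next
  case False then have "(a+b)^2 \<noteq> 0" by simp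
  then show ?thesis by (simp add: field_simps power2_eq_square)
qed

lemma alg_off:
  fixes a b :: real and x y :: complex
  assumes "a + b > 0"
  shows "(2 * (of_real (b - a) * x) / of_real (a + b)) * of_real b * (2 * (of_real (a - b) * (- cnj y)) / of_real (b + a))
    = of_real (4*b*(b-a)^2/(a+b)^2) * (x * cnj y)"
proof -
  have nz: "complex_of_real (a + b) \<noteq> 0"
  proof
    assume "complex_of_real (a+b) = 0"
    then have "a + b = 0" by (simp only: of_real_eq_0_iff)
    with assms show False by simp
  qed
  have "(2 * (of_real (b - a) * x) / of_real (a + b)) * of_real b * (2 * (of_real (a - b) * (- cnj y)) / of_real (b + a))
     = of_real (4*b*(b-a)^2) * (x * cnj y) / (of_real (a + b))^2"
    using nz by (simp add: field_simps power2_eq_square add.commute[of b a])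
  also have "\<dots> = of_real (4*b*(b-a)^2/(a+b)^2) * (x * cnj y)"
    by (simp add: field_simps)
  finally show ?thesis .
qed

lemma alg_diag:
  fixes a :: real and x y :: real
  assumes "a > 0"
  shows "(2 * complex_of_real x / of_real (a + a)) * of_real a * (2 * of_real y / of_real (a + a))
    = of_real (x * y / a)"
  using assms by (simp add: field_simps)


lemma main_at:
  fixes T :: "(real^'p) set"
    and p :: "'d::{finite,linorder} \<Rightarrow> real^'p \<Rightarrow> real"
    and w :: "'d::{finite,linorder} \<Rightarrow> real^'p \<Rightarrow> complex^'d::{finite,linorder}"
  assumes oT: "open T" and tT: "\<theta> \<in> T"
    and pnn: "\<forall>\<theta>\<in>T. \<forall>k. p k \<theta> \<ge> 0"
    and dp: "\<forall>k. p k differentiable (at \<theta>)"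
    and dw: "\<forall>k. w k differentiable (at \<theta>)"
    and on: "\<forall>\<theta>\<in>T. \<forall>i j. braket (w i \<theta>) (w j \<theta>) = (if i = j then 1 else 0)"
  shows "psd_le (H_info p w \<theta>) (CL_info p w \<theta>) \<and>
      psd_le (CL_info p w \<theta>) (CU_info p w \<theta>) \<and>
      (H_info p w \<theta> = CL_info p w \<theta> \<longleftrightarrow>
         (\<forall>m j k. j \<noteq> k \<and> p j \<theta> > 0 \<and> p k \<theta> > 0 \<longrightarrow>
            braket (pd (w j) \<theta> m) (w k \<theta>) = 0)) \<and>
      (CL_info p w \<theta> = CU_info p w \<theta> \<longleftrightarrow>
         (\<forall>m i. p i \<theta> > 0 \<longrightarrow> braket (pd (w i) \<theta> m) (w i \<theta>) = 0))"
proof -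
  define P where "P i = p i \<theta>" for i
  define dP where "dP m i = pd (p i) \<theta> m" for m i
  define W where "W i = w i \<theta>" for i
  define Dw where "Dw m i = pd (w i) \<theta> m" for m i
  define \<beta> where "\<beta> m i j = braket (W i) (Dw m j)" for m i j
  have on0: "\<forall>i j. braket (W i) (W j) = (if i = j then 1 else 0)"
    using on tT by (simp add: W_def)
  have Pnn: "P i \<ge> 0" for i using pnn tT by (simp add: P_def)
  have F2: "braket (Dw m i) (W j) = - \<beta> m i j" for m i j
    using ortho_deriv[OF oT tT on, of i j m] dw
    by (simp add: Dw_def W_def \<beta>_def eq_neg_iff_add_eq_0)
  have F3: "\<beta> m j i = - cnj (\<beta> m i j)" for m i j
    using F2[of m i j] braket_cnj[of "W j" "Dw m i"] by (simp add: \<beta>_def)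
  have F4: "P i = 0 \<Longrightarrow> dP m i = 0" for m i
    using pd_zero_min[OF oT tT, of "p i"] pnn dp by (simp add: P_def dP_def)
  define U where "U = Umat W"
  define tf where "tf A = adj U ** A ** U" for A
  have ent: "tf A $ i $ j = braket (W i) (A *v W j)" for A i j
    unfolding tf_def U_def by (rule tf_entry)
  have lin: "linear (\<lambda>A. braket (W i) (A *v W j))" for i j
    by (rule ent_linear)
  have tfmul: "tf (A ** B) $ i $ j = (\<Sum>k\<in>UNIV. tf A $ i $ k * tf B $ k $ j)" for A B i j
    using tf_mult[OF on0, of A B] by (simp add: tf_def U_def matrix_matrix_mult_def)
  have rho_eq: "rho p w \<theta> = (\<Sum>k\<in>UNIV. P k *\<^sub>R outer (W k) (W k))"
    by (simp add: rho_def P_def W_def)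
  have tfrho: "tf (rho p w \<theta>) $ i $ j = (if i = j then of_real (P i) else 0)" for i j
  proof -
    have "tf (rho p w \<theta>) $ i $ j = (\<Sum>k\<in>UNIV. P k *\<^sub>R (braket (W i) (W k) * braket (W k) (W j)))"
      unfolding ent rho_eq by (simp add: linear_sum[OF lin] linear_scale[OF lin] ent_outer)
    also have "\<dots> = (\<Sum>k\<in>UNIV. if k = i then (if i = j then of_real (P i) else 0) else 0)"
      by (rule sum.cong) (auto simp: on0 scaleR_conv_of_real)
    also have "\<dots> = (if i = j then of_real (P i) else 0)" by simp
    finally show ?thesis .
  qed
  have dR: "pd (rho p w) \<theta> m = (\<Sum>k\<in>UNIV. dP m k *\<^sub>R outer (W k) (W k)
      + P k *\<^sub>R (outer (W k) (Dw m k) + outer (Dw m k) (W k)))" for m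
    using rho_deriv[OF dp dw] by (simp add: dP_def P_def W_def Dw_def)
  have tfdR: "tf (pd (rho p w) \<theta> m) $ i $ j = (if i = j then of_real (dP m i) else 0) + of_real (P j - P i) * \<beta> m i j" for m i j
  proof -
    have "tf (pd (rho p w) \<theta> m) $ i $ j = (\<Sum>k\<in>UNIV. dP m k *\<^sub>R (braket (W i) (W k) * braket (W k) (W j))
        + P k *\<^sub>R (braket (W i) (W k) * braket (Dw m k) (W j) + braket (W i) (Dw m k) * braket (W k) (W j)))"
      unfolding ent dR by (simp add: linear_sum[OF lin] linear_scale[OF lin] linear_add[OF lin] ent_outer)
    also have "\<dots> = (\<Sum>k\<in>UNIV. (if k = i then (if i = j then of_real (dP m i) else 0) else 0)
        + (if k = i then - of_real (P i) * \<beta> m i j else 0) + (if k = j then of_real (P j) * \<beta> m i j else 0))"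
      by (rule sum.cong) (auto simp: on0 F2 scaleR_conv_of_real \<beta>_def[symmetric])
    also have "\<dots> = (if i = j then of_real (dP m i) else 0) + of_real (P j - P i) * \<beta> m i j"
      by (simp add: sum.distrib algebra_simps)
    finally show ?thesis .
  qed
  have tfeq: "tf ((1/2::real) *\<^sub>R (rho p w \<theta> ** L + L ** rho p w \<theta>)) $ i $ j
      = of_real ((P i + P j)/2) * tf L $ i $ j" for L i j
  proof -
    have "tf ((1/2::real) *\<^sub>R (rho p w \<theta> ** L + L ** rho p w \<theta>)) $ i $ j
        = (1/2::real) *\<^sub>R (tf (rho p w \<theta> ** L) $ i $ j + tf (L ** rho p w \<theta>) $ i $ j)"
      unfolding ent by (simp add: linear_scale[OF lin] linear_add[OF lin])
    also have "\<dots> = (1/2::real) *\<^sub>R (of_real (P i) * tf L $ i $ j + tf L $ i $ j * of_real (P j))"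
      unfolding tfmul tfrho by (simp add: sum_delta_l sum_delta_r)
    also have "\<dots> = of_real ((P i + P j)/2) * tf L $ i $ j"
      by (simp add: scaleR_conv_of_real algebra_simps)
    finally show ?thesis .
  qed
  have ex: "\<exists>L. hermitian L \<and> pd (rho p w) \<theta> m = (1/2::real) *\<^sub>R (rho p w \<theta> ** L + L ** rho p w \<theta>)" for m
  proof -
    define Lt where "Lt = (\<chi> i j. 2 * tf (pd (rho p w) \<theta> m) $ i $ j / of_real (P i + P j))"
    define L where "L = U ** Lt ** adj U"
    have tfL: "tf L = Lt" unfolding L_def tf_def U_def by (rule tf_back[OF on0])
    have cd: "cnj (tf (pd (rho p w) \<theta> m) $ j $ i) = tf (pd (rho p w) \<theta> m) $ i $ j" for i j
      unfolding tfdR F3[of m i j] by (simp add: algebra_simps)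
    have "adj Lt = Lt"
      unfolding adj_def Lt_def vec_eq_iff
      by (simp add: cd add.commute)
    then have herm: "hermitian L"
      unfolding hermitian_def L_def by (simp add: adj_mult matrix_mul_assoc)
    have "tf (pd (rho p w) \<theta> m) = tf ((1/2::real) *\<^sub>R (rho p w \<theta> ** L + L ** rho p w \<theta>))"
    proof (unfold vec_eq_iff, intro allI)
      fix i j
      show "tf (pd (rho p w) \<theta> m) $ i $ j = tf ((1/2::real) *\<^sub>R (rho p w \<theta> ** L + L ** rho p w \<theta>)) $ i $ j"
      proof (cases "P i + P j = 0")
        case True
        then have "P i = 0" "P j = 0" using Pnn[of i] Pnn[of j] by auto
        then show ?thesis unfolding tfeq tfdR using F4 by simp
      next
        case False
        then have c1: "complex_of_real (P i) + complex_of_real (P j) \<noteq> 0"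
          by (metis of_real_add of_real_eq_0_iff)
        then have c2: "2 * complex_of_real (P i) + 2 * complex_of_real (P j) \<noteq> 0"
          by (metis add_diff_cancel_left' diff_add_cancel distrib_left mult_eq_0_iff zero_neq_numeral)
        show ?thesis unfolding tfeq tfL Lt_def using c1 c2 by (simp add: field_simps)
      qed
    qed
    then have "pd (rho p w) \<theta> m = (1/2::real) *\<^sub>R (rho p w \<theta> ** L + L ** rho p w \<theta>)"
      using tf_inj[OF on0] unfolding tf_def U_def by blast
    then show ?thesis using herm by blast
  qed
  have S: "pd (rho p w) \<theta> m = (1/2::real) *\<^sub>R (rho p w \<theta> ** SLD p w \<theta> m + SLD p w \<theta> m ** rho p w \<theta>)" for m
    using someI_ex[OF ex[of m]] unfolding SLD_def by blast
  define Lt where "Lt m = tf (SLD p w \<theta> m)" for m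
  have Seq: "of_real (P i + P j) * Lt m $ i $ j = 2 * tf (pd (rho p w) \<theta> m) $ i $ j" for m i j
  proof -
    have "tf (pd (rho p w) \<theta> m) $ i $ j = of_real ((P i + P j)/2) * Lt m $ i $ j"
      unfolding Lt_def by (subst S) (rule tfeq)
    then show ?thesis by (simp add: field_simps)
  qed
  have Hent: "H_info p w \<theta> $ k $ l = Re (\<Sum>i\<in>UNIV. \<Sum>j\<in>UNIV. Lt k $ i $ j * of_real (P j) * Lt l $ j $ i)" for k l
  proof -
    have "H_info p w \<theta> $ k $ l = Re (mtrace (tf (SLD p w \<theta> k ** rho p w \<theta> ** SLD p w \<theta> l)))"
      unfolding H_info_def tf_def U_def by (simp add: mtrace_tf[OF on0])
    also have "mtrace (tf (SLD p w \<theta> k ** rho p w \<theta> ** SLD p w \<theta> l))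
       = (\<Sum>i\<in>UNIV. \<Sum>j\<in>UNIV. Lt k $ i $ j * of_real (P j) * Lt l $ j $ i)"
      unfolding mtrace_def tfmul tfrho Lt_def by (simp add: sum_delta_r)
    finally show ?thesis .
  qed
  define cc where "cc i j = 4*P j*(P j - P i)^2/(P i + P j)^2" for i j
  define G where "G k l i j = Re (\<beta> k i j * cnj (\<beta> l i j))" for k l i j
  have trm: "Re (Lt k $ i $ j * of_real (P j) * Lt l $ j $ i)
     = (if i = j \<and> P i > 0 then dP k i * dP l i / P i else 0) + (if i \<noteq> j then cc i j * G k l i j else 0)" for k l i j
  proof (cases "P j = 0")
    case True
    then show ?thesis by (auto simp: cc_def)
  next
    case False
    then have pj: "P j > 0" using Pnn[of j] by simp
    then have s: "P i + P j > 0" using Pnn[of i] by simp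
    have nz: "complex_of_real (P i + P j) \<noteq> 0" "complex_of_real (P j + P i) \<noteq> 0"
      using s by (auto simp only: of_real_eq_0_iff) 
    have e1: "Lt m $ i $ j = 2 * tf (pd (rho p w) \<theta> m) $ i $ j / of_real (P i + P j)" for m
      using Seq[of i j m] nz by (simp add: eq_divide_eq mult.commute)
    have e2: "Lt m $ j $ i = 2 * tf (pd (rho p w) \<theta> m) $ j $ i / of_real (P j + P i)" for m
      using Seq[of j i m] nz by (simp add: eq_divide_eq mult.commute)
    show ?thesis
    proof (cases "i = j")
      case True
      have "Lt k $ i $ j * of_real (P j) * Lt l $ j $ i = of_real (dP k i * dP l i / P i)"
        unfolding e1 e2 tfdR using True pj alg_diag[of "P i" "dP k i" "dP l i"] by simp
      then show ?thesis using True pj by simp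
    next
      case False
      have "Lt k $ i $ j * of_real (P j) * Lt l $ j $ i = of_real (cc i j) * (\<beta> k i j * cnj (\<beta> l i j))"
      proof -
        have ji: "j \<noteq> i" using False by simp
        have "Lt k $ i $ j * of_real (P j) * Lt l $ j $ i
          = (2 * (of_real (P j - P i) * \<beta> k i j) / of_real (P i + P j)) * of_real (P j) * (2 * (of_real (P i - P j) * (- cnj (\<beta> l i j))) / of_real (P j + P i))"
          by (simp only: e1 e2 tfdR F3[of l j i] False ji if_False add_0_left)
        also have "\<dots> = of_real (cc i j) * (\<beta> k i j * cnj (\<beta> l i j))"
          unfolding cc_def by (rule alg_off[OF s])
        finally show ?thesis .
      qed
      then show ?thesis using False by (simp add: G_def)
    qed
  qed
  have Hform: "H_info p w \<theta> $ k $ l = (\<Sum>i\<in>{i. P i > 0}. dP k i * dP l i / P i)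
      + (\<Sum>i\<in>UNIV. \<Sum>j\<in>UNIV. if i \<noteq> j then cc i j * G k l i j else 0)" for k l
  proof -
    have "H_info p w \<theta> $ k $ l = (\<Sum>i\<in>UNIV. \<Sum>j\<in>UNIV. (if i = j \<and> P i > 0 then dP k i * dP l i / P i else 0))
      + (\<Sum>i\<in>UNIV. \<Sum>j\<in>UNIV. if i \<noteq> j then cc i j * G k l i j else 0)"
      unfolding Hent Re_sum trm by (simp add: sum.distrib)
    also have "(\<Sum>i\<in>UNIV. \<Sum>j\<in>UNIV. (if i = j \<and> P i > 0 then dP k i * dP l i / P i else 0))
       = (\<Sum>i\<in>{i. P i > 0}. dP k i * dP l i / P i)"
      unfolding sum_set_if by (intro sum.cong refl) (auto simp: if_distrib cong: if_cong)
    finally show ?thesis .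
  qed
  have F3b: "braket (W j) (Dw m i) = - cnj (\<beta> m i j)" for m i j
    using F2[where m=m and i=i and j=j] braket_cnj[of "W j" "Dw m i"] by simp
  have F3c: "\<beta> m j i = - cnj (\<beta> m i j)" for m i j
    using F3b[where m=m and i=i and j=j] by (simp add: \<beta>_def)
  have Gsym: "G k l j i = G k l i j" for k l i j
    unfolding G_def F3c[where i=i and j=j] by (simp add: algebra_simps)
  have CLform: "CL_info p w \<theta> $ k $ l = (\<Sum>i\<in>{i. P i > 0}. dP k i * dP l i / P i)
      + (\<Sum>i\<in>UNIV. \<Sum>j\<in>UNIV. if i \<noteq> j then 4 * P j * G k l i j else 0)" for k l
  proof -
    have CL0: "CL_info p w \<theta> $ k $ l = (\<Sum>i\<in>{i. P i > 0}. (1 / P i) * dP k i * dP l i)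
      + 4 * Re (\<Sum>(i,j)\<in>{(i,j). i < j}. of_real (P i + P j) * braket (Dw k i) (W j) * braket (W j) (Dw l i))"
      by (simp add: CL_info_def P_def dP_def W_def Dw_def)
    have r: "Re (\<Sum>(i,j)\<in>{(i,j). i < j}. of_real (P i + P j) * braket (Dw k i) (W j) * braket (W j) (Dw l i))
       = (\<Sum>i\<in>UNIV. \<Sum>j\<in>UNIV. if i < j then (P i + P j) * G k l i j else 0)"
      unfolding sum_pairs Re_sum by (intro sum.cong refl) (auto simp: F2 F3b G_def; simp add: algebra_simps)
    have s1: "(\<Sum>i\<in>{i. P i > 0}. (1 / P i) * dP k i * dP l i) = (\<Sum>i\<in>{i. P i > 0}. dP k i * dP l i / P i)"
      by (intro sum.cong refl) simp
    have q: "4 * (\<Sum>i\<in>UNIV. \<Sum>j\<in>UNIV. if i \<noteq> j then P j * G k l i j else 0)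
       = (\<Sum>i\<in>UNIV. \<Sum>j\<in>UNIV. if i \<noteq> j then 4 * P j * G k l i j else 0)"
      unfolding sum_distrib_left by (intro sum.cong refl) simp
    show ?thesis
      unfolding CL0 r s1 sym_split[where G="G k l", OF Gsym] q ..
  qed
  define c where "c t = (if fst t \<noteq> snd t then 4 * P (snd t) - cc (fst t) (snd t) else 0)" for t :: "'d \<times> 'd"
  define \<gamma> where "\<gamma> m t = \<beta> m (fst t) (snd t)" for m t
  have cclosed: "4 * P j - cc i j = 16 * P i * (P j)^2 / (P i + P j)^2" for i j
    unfolding cc_def using coef_closed[OF Pnn[of i] Pnn[of j]] by simp
  have cnn: "\<forall>t\<in>UNIV. c t \<ge> 0"
    unfolding c_def cclosed using Pnn by auto
  have cpos: "c (i,j) > 0 \<longleftrightarrow> i \<noteq> j \<and> P i > 0 \<and> P j > 0" for i j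
  proof -
    have "16 * P i * (P j)^2 / (P i + P j)^2 > 0 \<longleftrightarrow> P i > 0 \<and> P j > 0"
      using Pnn[of i] Pnn[of j]
      by (auto simp: zero_less_divide_iff zero_less_mult_iff)
    then show ?thesis unfolding c_def cclosed by auto
  qed
  have D1: "CL_info p w \<theta> - H_info p w \<theta> = (\<chi> k l. \<Sum>t\<in>UNIV. c t * Re (\<gamma> k t * cnj (\<gamma> l t)))"
  proof (unfold vec_eq_iff, intro allI)
    fix k l
    have "(\<Sum>t\<in>UNIV. c t * Re (\<gamma> k t * cnj (\<gamma> l t))) = (\<Sum>i\<in>UNIV. \<Sum>j\<in>UNIV. if i \<noteq> j then (4 * P j - cc i j) * G k l i j else 0)"
      unfolding sum_UNIV_pairs by (intro sum.cong refl) (simp add: c_def \<gamma>_def G_def)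
    also have "\<dots> = (\<Sum>i\<in>UNIV. \<Sum>j\<in>UNIV. if i \<noteq> j then 4 * P j * G k l i j else 0) - (\<Sum>i\<in>UNIV. \<Sum>j\<in>UNIV. if i \<noteq> j then cc i j * G k l i j else 0)"
      unfolding sum_subtractf[symmetric] by (intro sum.cong refl) (simp add: algebra_simps)
    finally show "(CL_info p w \<theta> - H_info p w \<theta>) $ k $ l = (\<chi> k l. \<Sum>t\<in>UNIV. c t * Re (\<gamma> k t * cnj (\<gamma> l t))) $ k $ l"
      by (simp add: CLform Hform)
  qed
  define c2 where "c2 i = (if P i > 0 then 4 * P i else 0)" for i
  define \<gamma>2 where "\<gamma>2 m i = \<beta> m i i" for m i
  have c2nn: "\<forall>i\<in>UNIV. c2 i \<ge> 0" unfolding c2_def by auto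
  have D2: "CU_info p w \<theta> - CL_info p w \<theta> = (\<chi> k l. \<Sum>i\<in>UNIV. c2 i * Re (\<gamma>2 k i * cnj (\<gamma>2 l i)))"
  proof (unfold vec_eq_iff, intro allI)
    fix k l
    have e: "(CU_info p w \<theta> - CL_info p w \<theta>) $ k $ l = 4 * Re (\<Sum>i\<in>{i. P i > 0}. of_real (P i) * braket (Dw k i) (W i) * braket (W i) (Dw l i))"
      by (simp add: CU_info_def P_def W_def Dw_def)
    have pt: "4 * Re (if P i > 0 then of_real (P i) * braket (Dw k i) (W i) * braket (W i) (Dw l i) else 0)
       = c2 i * Re (\<gamma>2 k i * cnj (\<gamma>2 l i))" for i
      apply (cases "P i > 0")
       apply (simp_all add: c2_def \<gamma>2_def F2 F3b)
      apply (simp add: algebra_simps)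
      done
    show "(CU_info p w \<theta> - CL_info p w \<theta>) $ k $ l = (\<chi> k l. \<Sum>i\<in>UNIV. c2 i * Re (\<gamma>2 k i * cnj (\<gamma>2 l i))) $ k $ l"
      unfolding e vec_lambda_beta sum_set_if Re_sum sum_distrib_left
      by (intro sum.cong refl pt)
  qed
  have psd1: "psd_le (H_info p w \<theta>) (CL_info p w \<theta>)"
    unfolding psd_le_def D1 using gram_psd[OF cnn] by blast
  have psd2: "psd_le (CL_info p w \<theta>) (CU_info p w \<theta>)"
    unfolding psd_le_def D2 using gram_psd[OF c2nn] by blast
  have eq1: "(H_info p w \<theta> = CL_info p w \<theta>) \<longleftrightarrow> (\<forall>m j k. j \<noteq> k \<and> p j \<theta> > 0 \<and> p k \<theta> > 0 \<longrightarrow>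
            braket (pd (w j) \<theta> m) (w k \<theta>) = 0)"
  proof -
    have "(H_info p w \<theta> = CL_info p w \<theta>) \<longleftrightarrow> CL_info p w \<theta> - H_info p w \<theta> = 0" by auto
    also have "\<dots> \<longleftrightarrow> (\<forall>m. \<forall>t\<in>UNIV. c t > 0 \<longrightarrow> \<gamma> m t = 0)"
      unfolding D1 by (rule gram_zero[OF _ cnn]) simp
    also have "\<dots> \<longleftrightarrow> (\<forall>m j k. j \<noteq> k \<and> P j > 0 \<and> P k > 0 \<longrightarrow> \<beta> m j k = 0)"
      using cpos unfolding \<gamma>_def by auto
    also have "\<dots> \<longleftrightarrow> (\<forall>m j k. j \<noteq> k \<and> p j \<theta> > 0 \<and> p k \<theta> > 0 \<longrightarrow> braket (pd (w j) \<theta> m) (w k \<theta>) = 0)"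
      using F2 by (simp add: P_def Dw_def W_def)
    finally show ?thesis .
  qed
  have eq2: "(CL_info p w \<theta> = CU_info p w \<theta>) \<longleftrightarrow> (\<forall>m i. p i \<theta> > 0 \<longrightarrow> braket (pd (w i) \<theta> m) (w i \<theta>) = 0)"
  proof -
    have "(CL_info p w \<theta> = CU_info p w \<theta>) \<longleftrightarrow> CU_info p w \<theta> - CL_info p w \<theta> = 0" by auto
    also have "\<dots> \<longleftrightarrow> (\<forall>m. \<forall>i\<in>UNIV. c2 i > 0 \<longrightarrow> \<gamma>2 m i = 0)"
      unfolding D2 by (rule gram_zero[OF _ c2nn]) simp
    also have "\<dots> \<longleftrightarrow> (\<forall>m i. P i > 0 \<longrightarrow> \<beta> m i i = 0)"
      unfolding c2_def \<gamma>2_def by auto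
    also have "\<dots> \<longleftrightarrow> (\<forall>m i. p i \<theta> > 0 \<longrightarrow> braket (pd (w i) \<theta> m) (w i \<theta>) = 0)"
      using F2 by (simp add: P_def Dw_def W_def)
    finally show ?thesis .
  qed
  show ?thesis using psd1 psd2 eq1 eq2 by blast
qed


theorem theorem3p3:
  fixes \<Theta> :: "(real^'p) set"
    and p :: "'d::{finite,linorder} \<Rightarrow> real^'p \<Rightarrow> real"
    and w :: "'d::{finite,linorder} \<Rightarrow> real^'p \<Rightarrow> complex^'d::{finite,linorder}"
  assumes "open \<Theta>"
    and "\<forall>\<theta>\<in>\<Theta>. \<forall>k. p k \<theta> \<ge> 0"
    and "\<forall>\<theta>\<in>\<Theta>. (\<Sum>k\<in>UNIV. p k \<theta>) = 1"
    and "\<forall>\<theta>\<in>\<Theta>. \<forall>k. p k differentiable (at \<theta>)"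
    and "\<forall>\<theta>\<in>\<Theta>. \<forall>k. w k differentiable (at \<theta>)"
    and "\<forall>\<theta>\<in>\<Theta>. \<forall>i j. braket (w i \<theta>) (w j \<theta>) = (if i = j then 1 else 0)"
  shows "\<forall>\<theta>\<in>\<Theta>.
      psd_le (H_info p w \<theta>) (CL_info p w \<theta>) \<and>
      psd_le (CL_info p w \<theta>) (CU_info p w \<theta>) \<and>
      (H_info p w \<theta> = CL_info p w \<theta> \<longleftrightarrow>
         (\<forall>m j k. j \<noteq> k \<and> p j \<theta> > 0 \<and> p k \<theta> > 0 \<longrightarrow>
            braket (pd (w j) \<theta> m) (w k \<theta>) = 0)) \<and>
      (CL_info p w \<theta> = CU_info p w \<theta> \<longleftrightarrow>
         (\<forall>m i. p i \<theta> > 0 \<longrightarrow> braket (pd (w i) \<theta> m) (w i \<theta>) = 0))"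
  proof (intro ballI)
  fix \<theta> assume th: "\<theta> \<in> \<Theta>"
  show "psd_le (H_info p w \<theta>) (CL_info p w \<theta>) \<and>
      psd_le (CL_info p w \<theta>) (CU_info p w \<theta>) \<and>
      (H_info p w \<theta> = CL_info p w \<theta> \<longleftrightarrow>
         (\<forall>m j k. j \<noteq> k \<and> p j \<theta> > 0 \<and> p k \<theta> > 0 \<longrightarrow>
            braket (pd (w j) \<theta> m) (w k \<theta>) = 0)) \<and>
      (CL_info p w \<theta> = CU_info p w \<theta> \<longleftrightarrow>
         (\<forall>m i. p i \<theta> > 0 \<longrightarrow> braket (pd (w i) \<theta> m) (w i \<theta>) = 0))"
    by (rule main_at[OF assms(1) th assms(2)]) (use assms(4,5,6) th in auto)
qed

end
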